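(* Let $\mathcal{H}\in\mathbb{R}_D^{[2,2]}$ and write its Hermitian flattening matrix as $\mathfrak{m}(\mathcal{H})=\begin{pmatrix}A&C\\C&B\end{pmatrix}$ with $A,B,C$ real symmetric $2\times 2$ matrices. Then $\operatorname{hrank}_{\mathbb{R}}(\mathcal{H})\le 5$. Moreover, if one of $A,B$ is positive definite (or negative definite), or if $A=B=0$, then $\operatorname{hrank}(\mathcal{H})=\operatorname{hrank}_{\mathbb{R}}(\mathcal{H})\le 4$.
   Context: $\mathbb{C}^{[n_1,n_2]}$ is the real vector space of tensors $\mathcal{H}\in\mathbb{C}^{n_1\times n_2\times n_1\times n_2}$ with $\mathcal{H}_{i_1i_2j_1j_2}=\overline{\mathcal{H}_{j_1j_2i_1i_2}}$. For $v_i\in\mathbb{C}^{n_i}$, $[v_1,v_2]_{\otimes h}:=v_1\otimes v_2\otimes\overline{v_1}\otimes\overline{v_2}$. The Hermitian rank $\operatorname{hrank}(\mathcal{H})$ is the smallest $r$ with $\mathcal{H}=\sum_{i=1}^r\lambda_i[u_i^1,u_i^2]_{\otimes h}$, $\lambda_i\in\mathbb{R}$, $u_i^j\in\mathbb{C}^{n_j}$. $\mathbb{R}_D^{[2,2]}$ is the set of real tensors in $\mathbb{C}^{[2,2]}$ that can be written as $\sum_i\lambda_i[u_i^1,u_i^2]_{\otimes h}$ with $\lambda_i\in\mathbb{R}$ and real vectors $u_i^j\in\mathbb{R}^2$; for such $\mathcal{H}$, $\operatorname{hrank}_{\mathbb{R}}(\mathcal{H})$ is the smallest length of such a decomposition with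 real vectors. The Hermitian flattening $\mathfrak{m}(\mathcal{H})$ is the $4\times4$ matrix with $(\mathfrak{m}(\mathcal{H}))_{(i_1,i_2),(j_1,j_2)}=\mathcal{H}_{i_1i_2j_1j_2}$, rows and columns indexed by pairs in lexicographic order $(1,1),(1,2),(2,1),(2,2)$; equivalently $\mathfrak{m}$ is linear with $\mathfrak{m}([v_1,v_2]_{\otimes h})=(v_1v_1^* )\boxtimes(v_2v_2^* )$, $\boxtimes$ the Kronecker product. Thus $A$ is the block with $i_1=j_1=1$, $B$ the block with $i_1=j_1=2$, $C$ the block with $i_1=1,j_1=2$. *)

theory Defs
  imports "HOL-Analysis.Analysis"
begin

type_synonym tensor22 = "complex^2^2^2^2"

definition hermitian22 :: "tensor22 \<Rightarrow> bool" where
  "hermitian22 H \<longleftrightarrow> (\<forall>i1 i2 j1 j2. H$i1$i2$j1$j2 = cnj (H$j1$j2$i1$i2))"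

definition herm_prod :: "complex^2 \<Rightarrow> complex^2 \<Rightarrow> tensor22" where
  "herm_prod v1 v2 = (\<chi> i1 i2 j1 j2. v1$i1 * v2$i2 * cnj (v1$j1) * cnj (v2$j2))"

definition cvec :: "real^2 \<Rightarrow> complex^2" where
  "cvec u = (\<chi> i. complex_of_real (u$i))"

definition hrank :: "tensor22 \<Rightarrow> nat" where
  "hrank H = (LEAST r. \<exists>(lam::nat \<Rightarrow> real) (u1::nat \<Rightarrow> complex^2) (u2::nat \<Rightarrow> complex^2).
      H = (\<Sum>i<r. lam i *\<^sub>R herm_prod (u1 i) (u2 i)))"

definition hrank_R :: "tensor22 \<Rightarrow> nat" where
  "hrank_R H = (LEAST r. \<exists>(lam::nat \<Rightarrow> real) (u1::nat \<Rightarrow> real^2) (u2::nat \<Rightarrow> real^2).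
      H = (\<Sum>i<r. lam i *\<^sub>R herm_prod (cvec (u1 i)) (cvec (u2 i))))"

definition RD22 :: "tensor22 set" where
  "RD22 = {H. hermitian22 H \<and> (\<forall>i1 i2 j1 j2. Im (H$i1$i2$j1$j2) = 0) \<and>
      (\<exists>r (lam::nat \<Rightarrow> real) (u1::nat \<Rightarrow> real^2) (u2::nat \<Rightarrow> real^2).
         H = (\<Sum>i<r. lam i *\<^sub>R herm_prod (cvec (u1 i)) (cvec (u2 i))))}"

definition hflat :: "tensor22 \<Rightarrow> (2 \<times> 2) \<Rightarrow> (2 \<times> 2) \<Rightarrow> complex" where
  "hflat H = (\<lambda>(i1,i2) (j1,j2). H$i1$i2$j1$j2)"

text \<open>Diagonal block k of m(H) (i1 = j1 = k), as a real 2x2 matrix (H real).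
  A = flat_block H 1, B = flat_block H 2; C is the block i1 = 1, j1 = 2.\<close>
definition flat_block :: "tensor22 \<Rightarrow> 2 \<Rightarrow> 2 \<Rightarrow> real^2^2" where
  "flat_block H k l = (\<chi> i j. Re (hflat H (k,i) (l,j)))"

definition pos_def :: "real^2^2 \<Rightarrow> bool" where
  "pos_def M \<longleftrightarrow> (\<forall>x. x \<noteq> 0 \<longrightarrow> x \<bullet> (M *v x) > 0)"

definition neg_def :: "real^2^2 \<Rightarrow> bool" where
  "neg_def M \<longleftrightarrow> (\<forall>x. x \<noteq> 0 \<longrightarrow> x \<bullet> (M *v x) < 0)"

end

theory Submission
  imports Defs
begin

lemma sum_22: "(\<Sum>p\<in>(UNIV::(2\<times>2) set). f p) = f (1,1) + f (1,2) + f (2,1) + f (2,2)"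
proof -
  have "(\<Sum>p\<in>(UNIV::(2\<times>2) set). f p) = (\<Sum>p\<in>UNIV\<times>UNIV. f p)" by simp
  also have "\<dots> = (\<Sum>a\<in>UNIV. \<Sum>b\<in>UNIV. f (a,b))" by (simp add: sum.cartesian_product)
  finally show ?thesis by (simp add: sum_2 add.assoc)
qed

definition Qf :: "tensor22 \<Rightarrow> real^2^2 \<Rightarrow> real^2^2 \<Rightarrow> complex" where
  "Qf H Z W = (\<Sum>i1\<in>UNIV. \<Sum>i2\<in>UNIV. \<Sum>j1\<in>UNIV. \<Sum>j2\<in>UNIV.
      of_real (Z$i1$i2) * H$i1$i2$j1$j2 * of_real (W$j1$j2))"

lemma LB:
  fixes Z :: "nat \<Rightarrow> real^2^2"
  assumes H: "H = (\<Sum>i<r. lam i *\<^sub>R herm_prod (u1 i) (u2 i))"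
    and orth: "\<And>l m. l < k \<Longrightarrow> m < k \<Longrightarrow> l \<noteq> m \<Longrightarrow> Qf H (Z l) (Z m) = 0"
    and nd: "\<And>l. l < k \<Longrightarrow> Qf H (Z l) (Z l) \<noteq> 0"
  shows "k \<le> r"
proof -
  define y :: "nat \<Rightarrow> complex^(2\<times>2)" where
    "y l = (\<chi> p. \<Sum>j1\<in>UNIV. \<Sum>j2\<in>UNIV. H$fst p$snd p$j1$j2 * of_real (Z l$j1$j2))" for l
  define c :: "nat \<Rightarrow> complex^(2\<times>2)" where
    "c i = (\<chi> p. u1 i$fst p * u2 i$snd p)" for i
  define phi :: "nat \<Rightarrow> complex^(2\<times>2) \<Rightarrow> complex" where
    "phi m v = (\<Sum>p\<in>UNIV. of_real (Z m $ fst p $ snd p) * v$p)" for m v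
  have phiy: "phi m (y l) = Qf H (Z m) (Z l)" for m l
    by (simp add: phi_def y_def Qf_def sum_22 sum_2 algebra_simps)
  have philin: "phi m (\<Sum>v\<in>S. f v *s v) = (\<Sum>v\<in>S. f v * phi m v)" for m S f
    unfolding phi_def by (simp add: sum_distrib_left sum_distrib_right mult_ac, rule sum.swap)
  have yspan: "y l \<in> vec.span (c ` {..<r})" for l
  proof -
    have "y l = (\<Sum>i<r. (of_real (lam i) * (\<Sum>j1\<in>UNIV. \<Sum>j2\<in>UNIV. cnj (u1 i$j1) * cnj (u2 i$j2) * of_real (Z l$j1$j2))) *s c i)"
      unfolding y_def c_def H
      by (simp add: vec_eq_iff herm_prod_def sum_2 sum.distrib) (simp add: scaleR_conv_of_real sum_distrib_left sum_distrib_right sum.distrib[symmetric] algebra_simps)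
    also have "\<dots> \<in> vec.span (c ` {..<r})"
      by (intro vec.span_sum vec.span_scale vec.span_base) auto
    finally show ?thesis .
  qed
  have inj: "inj_on y {..<k}"
  proof (rule inj_onI)
    fix l m assume "l \<in> {..<k}" "m \<in> {..<k}" "y l = y m"
    then show "l = m" using orth[of m l] nd[of m] phiy[of m l] phiy[of m m] by auto
  qed
  have ind: "vec.independent (y ` {..<k})"
  proof (rule vec.independent_if_scalars_zero)
    show "finite (y ` {..<k})" by simp
    fix f x assume eq: "(\<Sum>x\<in>y ` {..<k}. f x *s x) = 0" and x: "x \<in> y ` {..<k}"
    then obtain m where m: "m < k" "x = y m" by auto
    have "0 = phi m (\<Sum>x\<in>y ` {..<k}. f x *s x)" by (simp add: eq phi_def)
    also have "\<dots> = (\<Sum>l<k. f (y l) * Qf H (Z m) (Z l))"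
      by (simp only: philin) (simp add: sum.reindex[OF inj] phiy)
    also have "\<dots> = f (y m) * Qf H (Z m) (Z m)"
      using m orth by (subst sum.remove[of _ m]) (auto intro!: sum.neutral)
    finally show "f x = 0" using nd[OF m(1)] m by simp
  qed
  have "card (y ` {..<k}) \<le> card (c ` {..<r})"
    using vec.independent_span_bound[OF _ ind] yspan by auto
  also have "\<dots> \<le> r" using card_image_le[of "{..<r}" c] by simp
  finally show ?thesis using card_image[OF inj] by simp
qed


definition outer :: "real^2 \<Rightarrow> real^2^2" where
  "outer y = (\<chi> i j. y$i * y$j)"

definition mk :: "real^2^2 \<Rightarrow> real^2^2 \<Rightarrow> real^2^2 \<Rightarrow> tensor22" where
  "mk A B C = (\<chi> i1 i2 j1 j2. complex_of_real
     ((if i1 = 1 \<and> j1 = 1 then A else if i1 = 2 \<and> j1 = 2 then B else C) $ i2 $ j2))"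

definition rdec :: "tensor22 \<Rightarrow> nat \<Rightarrow> bool" where
  "rdec H n \<longleftrightarrow> (\<exists>(lam::nat \<Rightarrow> real) (u1::nat \<Rightarrow> real^2) (u2::nat \<Rightarrow> real^2).
      H = (\<Sum>i<n. lam i *\<^sub>R herm_prod (cvec (u1 i)) (cvec (u2 i))))"

definition symm :: "real^2^2 \<Rightarrow> bool" where "symm M \<longleftrightarrow> M$1$2 = M$2$1"

lemma one_neq_two_2 [simp]: "(1::2) \<noteq> 2" "(2::2) \<noteq> 1"
  by (simp_all add: eq_commute[of 2])

lemma mk_hp: "herm_prod (cvec x) (cvec y) =
   mk ((x$1)^2 *\<^sub>R outer y) ((x$2)^2 *\<^sub>R outer y) ((x$1*x$2) *\<^sub>R outer y)"
  by (simp add: vec_eq_iff forall_2 herm_prod_def cvec_def mk_def outer_def power2_eq_square)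

lemma mk_add: "mk A B C + mk A' B' C' = mk (A+A') (B+B') (C+C')"
  by (simp add: vec_eq_iff forall_2 mk_def)

lemma mk_scale: "c *\<^sub>R mk A B C = mk (c *\<^sub>R A) (c *\<^sub>R B) (c *\<^sub>R C)"
  by (simp add: vec_eq_iff forall_2 mk_def) (simp add: scaleR_conv_of_real)

lemma mk_zero: "mk 0 0 0 = 0"
  by (simp add: vec_eq_iff forall_2 mk_def)

lemma mk_sum: "(\<Sum>i\<in>S. mk (f i) (g i) (h i)) = mk (\<Sum>i\<in>S. f i) (\<Sum>i\<in>S. g i) (\<Sum>i\<in>S. h i)"
proof (cases "finite S")
  case True then show ?thesis
    by (induct S rule: finite_induct) (simp_all add: mk_zero mk_add)
qed (simp add: mk_zero)

lemma rdec_0: "rdec 0 0" by (simp add: rdec_def)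

lemma rdec_1: "rdec (c *\<^sub>R herm_prod (cvec x) (cvec y)) 1"
  unfolding rdec_def by (rule exI[of _ "\<lambda>_. c"], rule exI[of _ "\<lambda>_. x"], rule exI[of _ "\<lambda>_. y"]) simp

lemma sum_lessThan_add: "(\<Sum>i<(n::nat)+m. f i) = (\<Sum>i<n. f i) + (\<Sum>i<m. f (n+i))"
  by (induction m) (simp_all add: add.assoc)

lemma rdec_add: assumes "rdec H1 n1" "rdec H2 n2" shows "rdec (H1 + H2) (n1 + n2)"
proof -
  obtain l1 a1 b1 where 1: "H1 = (\<Sum>i<n1. l1 i *\<^sub>R herm_prod (cvec (a1 i)) (cvec (b1 i)))"
    using assms(1) by (auto simp: rdec_def)
  obtain l2 a2 b2 where 2: "H2 = (\<Sum>i<n2. l2 i *\<^sub>R herm_prod (cvec (a2 i)) (cvec (b2 i)))"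
    using assms(2) by (auto simp: rdec_def)
  define l where "l i = (if i < n1 then l1 i else l2 (i - n1))" for i
  define a where "a i = (if i < n1 then a1 i else a2 (i - n1))" for i
  define b where "b i = (if i < n1 then b1 i else b2 (i - n1))" for i
  have "H1 + H2 = (\<Sum>i<n1+n2. l i *\<^sub>R herm_prod (cvec (a i)) (cvec (b i)))"
    unfolding sum_lessThan_add 1 2 l_def a_def b_def by simp
  then show ?thesis unfolding rdec_def by blast
qed

lemma rdec_sum: "(\<And>j. j < s \<Longrightarrow> rdec (T j) m) \<Longrightarrow> rdec (\<Sum>j<s. T j) (s*m)"
proof (induction s)
  case 0 then show ?case by (simp add: rdec_0)
next
  case (Suc s)
  then have "rdec ((\<Sum>j<s. T j) + T s) (s*m + m)" by (intro rdec_add) auto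
  then show ?case by (simp add: add.commute)
qed

lemma hrank_le: assumes "rdec H n" shows "hrank H \<le> n"
proof -
  obtain l a b where "H = (\<Sum>i<n. l i *\<^sub>R herm_prod (cvec (a i)) (cvec (b i)))"
    using assms by (auto simp: rdec_def)
  then have "\<exists>(lam::nat \<Rightarrow> real) (u1::nat \<Rightarrow> complex^2) (u2::nat \<Rightarrow> complex^2).
      H = (\<Sum>i<n. lam i *\<^sub>R herm_prod (u1 i) (u2 i))"
    by (intro exI[of _ l] exI[of _ "\<lambda>i. cvec (a i)"] exI[of _ "\<lambda>i. cvec (b i)"])
  then show ?thesis unfolding hrank_def by (rule Least_le)
qed

lemma hrank_R_le: assumes "rdec H n" shows "hrank_R H \<le> n"
  using assms unfolding rdec_def hrank_R_def by (rule Least_le)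

lemma hrank_le_hrank_R: assumes "rdec H n" shows "hrank H \<le> hrank_R H"
proof -
  have e: "hrank_R H = (LEAST r. rdec H r)" by (simp add: hrank_R_def rdec_def)
  have "rdec H (hrank_R H)"
    unfolding e using assms by (rule LeastI)
  then show ?thesis by (rule hrank_le)
qed

lemma hrank_ge:
  fixes Z :: "nat \<Rightarrow> real^2^2"
  assumes "rdec H n"
    and orth: "\<And>l m. l < k \<Longrightarrow> m < k \<Longrightarrow> l \<noteq> m \<Longrightarrow> Qf H (Z l) (Z m) = 0"
    and nd: "\<And>l. l < k \<Longrightarrow> Qf H (Z l) (Z l) \<noteq> 0"
  shows "k \<le> hrank H"
proof -
  have ex: "\<exists>r (lam::nat \<Rightarrow> real) (u1::nat \<Rightarrow> complex^2) (u2::nat \<Rightarrow> complex^2).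
      H = (\<Sum>i<r. lam i *\<^sub>R herm_prod (u1 i) (u2 i))"
  proof -
    obtain l a b where "H = (\<Sum>i<n. l i *\<^sub>R herm_prod (cvec (a i)) (cvec (b i)))"
      using assms(1) by (auto simp: rdec_def)
    then show ?thesis
      by (intro exI[of _ n] exI[of _ l] exI[of _ "\<lambda>i. cvec (a i)"] exI[of _ "\<lambda>i. cvec (b i)"])
  qed
  show ?thesis unfolding hrank_def
    by (rule LeastI2_ex[OF ex]) (use LB orth nd in blast)
qed

lemma EQ:
  fixes Z :: "nat \<Rightarrow> real^2^2"
  assumes "rdec H k"
    and orth: "\<And>l m. l < k \<Longrightarrow> m < k \<Longrightarrow> l \<noteq> m \<Longrightarrow> Qf H (Z l) (Z m) = 0"
    and nd: "\<And>l. l < k \<Longrightarrow> Qf H (Z l) (Z l) \<noteq> 0"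
  shows "hrank H = k \<and> hrank_R H = k"
proof -
  have "k \<le> hrank H" by (rule hrank_ge[OF assms(1)]) (use orth nd in auto)
  then show ?thesis using hrank_le[OF assms(1)] hrank_R_le[OF assms(1)] hrank_le_hrank_R[OF assms(1)]
  by linarith
qed

definition bil :: "real^2^2 \<Rightarrow> real^2 \<Rightarrow> real^2 \<Rightarrow> real" where
  "bil M x y = (\<Sum>i\<in>UNIV. \<Sum>j\<in>UNIV. x$i * M$i$j * y$j)"

definition qf :: "real^2^2 \<Rightarrow> real^2^2 \<Rightarrow> real^2^2 \<Rightarrow> real^2^2 \<Rightarrow> real^2^2 \<Rightarrow> real" where
  "qf A B C Z W = bil A (Z$1) (W$1) + bil C (Z$1) (W$2) + bil C (Z$2) (W$1) + bil B (Z$2) (W$2)"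

lemma Qf_mk: "Qf (mk A B C) Z W = complex_of_real (qf A B C Z W)"
  by (simp add: Qf_def qf_def bil_def mk_def sum_2 algebra_simps)

lemma bil_add: "bil (M + N) x y = bil M x y + bil N x y"
  by (simp add: bil_def sum_2 algebra_simps)
lemma bil_scale: "bil (c *\<^sub>R M) x y = c * bil M x y"
  by (simp add: bil_def sum_2 algebra_simps)
lemma bil_outer: "bil (outer v) x y = (x \<bullet> v) * (y \<bullet> v)"
  by (simp add: bil_def outer_def sum_2 inner_vec_def algebra_simps)
lemma bil_sum: "bil (\<Sum>i\<in>S. f i) x y = (\<Sum>i\<in>S. bil (f i) x y)"
proof (cases "finite S")
  case True then show ?thesis by (induction S rule: finite_induct) (simp_all add: bil_add, simp add: bil_def)
qed (simp add: bil_def)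


lemma RD_mk:
  assumes "H \<in> RD22"
  shows "H = mk (flat_block H 1 1) (flat_block H 2 2) (flat_block H 1 2) \<and>
    symm (flat_block H 1 1) \<and> symm (flat_block H 2 2) \<and> symm (flat_block H 1 2)"
proof -
  have "\<exists>(r::nat) lam u1 u2. H = (\<Sum>i<r. lam i *\<^sub>R herm_prod (cvec (u1 i)) (cvec (u2 i)))"
    using assms by (simp add: RD22_def)
  then obtain r lam u1 u2 where H: "H = (\<Sum>i<(r::nat). lam i *\<^sub>R herm_prod (cvec (u1 i)) (cvec (u2 i)))"
    by blast
  define A0 where "A0 = (\<Sum>i<r. (lam i * (u1 i$1)^2) *\<^sub>R outer (u2 i))"
  define B0 where "B0 = (\<Sum>i<r. (lam i * (u1 i$2)^2) *\<^sub>R outer (u2 i))"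
  define C0 where "C0 = (\<Sum>i<r. (lam i * (u1 i$1 * u1 i$2)) *\<^sub>R outer (u2 i))"
  have H0: "H = mk A0 B0 C0"
    unfolding H A0_def B0_def C0_def mk_hp mk_scale mk_sum by simp
  have s: "symm (\<Sum>i<r. c i *\<^sub>R outer (u2 i))" for c
    by (simp add: symm_def outer_def mult.commute)
  have fb: "flat_block (mk A B C) 1 1 = A" "flat_block (mk A B C) 2 2 = B"
       "flat_block (mk A B C) 1 2 = C" for A B C
    by (simp_all add: vec_eq_iff forall_2 flat_block_def hflat_def mk_def)
  show ?thesis using H0 s unfolding A0_def B0_def C0_def by (simp add: fb)
qed

definition sw2 :: "2 \<Rightarrow> 2" where "sw2 i = (if i = 1 then 2 else 1)"
lemma sw2_simps [simp]: "sw2 1 = 2" "sw2 2 = 1" "sw2 (sw2 i) = i"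
  by (simp_all add: sw2_def) (metis exhaust_2)

definition swT :: "tensor22 \<Rightarrow> tensor22" where
  "swT T = (\<chi> i1 i2 j1 j2. T$(sw2 i1)$i2$(sw2 j1)$j2)"
definition swc :: "complex^2 \<Rightarrow> complex^2" where "swc u = (\<chi> i. u$(sw2 i))"
definition swr :: "real^2 \<Rightarrow> real^2" where "swr u = (\<chi> i. u$(sw2 i))"

lemma swT_swT [simp]: "swT (swT T) = T" by (simp add: swT_def vec_eq_iff)
lemma swT_sum: "swT (\<Sum>i\<in>S. f i) = (\<Sum>i\<in>S. swT (f i))" by (simp add: swT_def vec_eq_iff)
lemma swT_scale: "swT (c *\<^sub>R T) = c *\<^sub>R swT T" by (simp add: swT_def vec_eq_iff)
lemma swT_hp: "swT (herm_prod u v) = herm_prod (swc u) v"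
  by (simp add: swT_def vec_eq_iff herm_prod_def swc_def)
lemma cvec_swr: "cvec (swr x) = swc (cvec x)" by (simp add: cvec_def vec_eq_iff swc_def swr_def)
lemma swT_mk: "swT (mk A B C) = mk B A C"
  by (simp add: swT_def vec_eq_iff forall_2 mk_def)

lemma rdec_swT: "rdec H n \<Longrightarrow> rdec (swT H) n"
proof -
  assume "rdec H n"
  then obtain l a b where "H = (\<Sum>i<n. l i *\<^sub>R herm_prod (cvec (a i)) (cvec (b i)))"
    by (auto simp: rdec_def)
  then have "swT H = (\<Sum>i<n. l i *\<^sub>R herm_prod (cvec (swr (a i))) (cvec (b i)))"
    by (simp add: swT_sum swT_scale swT_hp cvec_swr)
  then show ?thesis unfolding rdec_def
    by (intro exI[of _ l] exI[of _ "\<lambda>i. swr (a i)"] exI[of _ b])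
qed

lemma hrank_R_swT: "hrank_R (swT H) = hrank_R H"
proof -
  have "rdec (swT H) = rdec H"
    using rdec_swT[of H] rdec_swT[of "swT H"] by auto
  then show ?thesis by (simp add: hrank_R_def rdec_def[abs_def])
qed

lemma hrank_swT: "hrank (swT H) = hrank H"
proof -
  define P where "P H r \<longleftrightarrow> (\<exists>(lam::nat \<Rightarrow> real) (u1::nat \<Rightarrow> complex^2) (u2::nat \<Rightarrow> complex^2).
      H = (\<Sum>i<r. lam i *\<^sub>R herm_prod (u1 i) (u2 i)))" for H r
  have imp: "P H r \<Longrightarrow> P (swT H) r" for H r
  proof -
    assume "P H r"
    then obtain l a b where "H = (\<Sum>i<r. l i *\<^sub>R herm_prod (a i) (b i))" by (auto simp: P_def)
    then have "swT H = (\<Sum>i<r. l i *\<^sub>R herm_prod (swc (a i)) (b i))"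
      by (simp add: swT_sum swT_scale swT_hp)
    then show ?thesis unfolding P_def
      by (intro exI[of _ l] exI[of _ "\<lambda>i. swc (a i)"] exI[of _ b])
  qed
  have "P (swT H) = P H" using imp[of H] imp[of "swT H"] by auto
  then show ?thesis unfolding hrank_def P_def[symmetric] by simp
qed


definition v2 :: "real \<Rightarrow> real \<Rightarrow> real^2" where "v2 a b = vector [a, b]"
lemma v2_simps [simp]: "v2 a b $ 1 = a" "v2 a b $ 2 = b" by (simp_all add: v2_def)

definition blk :: "real^2 \<Rightarrow> real^2 \<Rightarrow> real^2^2" where "blk a b = vector [a, b]"
lemma blk_simps [simp]: "blk a b $ 1 = a" "blk a b $ 2 = b" by (simp_all add: blk_def)

definition det2 :: "real^2^2 \<Rightarrow> real" where "det2 M = M$1$1 * M$2$2 - M$1$2 * M$2$1"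

lemma inner2: "x \<bullet> (y::real^2) = x$1 * y$1 + x$2 * y$2"
  by (simp add: inner_vec_def sum_2)

lemma det_two: "det2 (a *\<^sub>R outer z + b *\<^sub>R outer w) = a * b * (z$1 * w$2 - z$2 * w$1)^2"
  by (simp add: det2_def outer_def power2_eq_square algebra_simps)

lemma CORE:
  fixes z w :: "real^2" and v \<nu> :: "nat \<Rightarrow> real^2" and a1 a2 g1 g2 :: real and \<sigma> :: "nat \<Rightarrow> real" and s :: nat
  defines "A \<equiv> a1 *\<^sub>R outer z + a2 *\<^sub>R outer w"
    and "C \<equiv> (a1 * g1) *\<^sub>R outer z + (a2 * g2) *\<^sub>R outer w"
    and "S \<equiv> (\<Sum>j<s. \<sigma> j *\<^sub>R outer (v j))"
  defines "B \<equiv> (a1 * g1^2) *\<^sub>R outer z + (a2 * g2^2) *\<^sub>R outer w + S"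
  assumes dA: "det2 A \<noteq> 0"
    and orth: "\<And>i j. i < s \<Longrightarrow> j < s \<Longrightarrow> i \<noteq> j \<Longrightarrow> bil S (\<nu> i) (\<nu> j) = 0"
    and nd: "\<And>j. j < s \<Longrightarrow> bil S (\<nu> j) (\<nu> j) \<noteq> 0"
  shows "rdec (mk A B C) (2 + s) \<and> hrank (mk A B C) = 2 + s \<and> hrank_R (mk A B C) = 2 + s"
proof -
  define D where "D = z$1 * w$2 - z$2 * w$1"
  have "det2 A = a1 * a2 * D^2" unfolding A_def D_def by (rule det_two)
  with dA have a1: "a1 \<noteq> 0" and a2: "a2 \<noteq> 0" and D: "D \<noteq> 0" by auto
  have dec: "mk A B C = (a1 *\<^sub>R herm_prod (cvec (v2 1 g1)) (cvec z) + a2 *\<^sub>R herm_prod (cvec (v2 1 g2)) (cvec w))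
      + (\<Sum>j<s. \<sigma> j *\<^sub>R herm_prod (cvec (v2 0 1)) (cvec (v j)))"
    unfolding mk_hp mk_scale mk_sum mk_add A_def B_def C_def S_def
    by (simp add: algebra_simps power2_eq_square)
  have rd: "rdec (mk A B C) (2 + s)"
  proof -
    have "rdec (a1 *\<^sub>R herm_prod (cvec (v2 1 g1)) (cvec z) + a2 *\<^sub>R herm_prod (cvec (v2 1 g2)) (cvec w)) (1+1)"
      by (intro rdec_add rdec_1)
    moreover have "rdec (\<Sum>j<s. \<sigma> j *\<^sub>R herm_prod (cvec (v2 0 1)) (cvec (v j))) (s*1)"
      by (intro rdec_sum rdec_1)
    ultimately show ?thesis unfolding dec using rdec_add by fastforce
  qed
  define \<zeta>1 where "\<zeta>1 = v2 (w$2) (- w$1)"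
  define \<zeta>2 where "\<zeta>2 = v2 (- z$2) (z$1)"
  define P where "P n = (- (g1 * (z \<bullet> n) / D)) *\<^sub>R \<zeta>1 + (- (g2 * (w \<bullet> n) / D)) *\<^sub>R \<zeta>2" for n
  have zz: "z \<bullet> \<zeta>1 = D" "w \<bullet> \<zeta>1 = 0" "z \<bullet> \<zeta>2 = 0" "w \<bullet> \<zeta>2 = D"
           "\<zeta>1 \<bullet> z = D" "\<zeta>1 \<bullet> w = 0" "\<zeta>2 \<bullet> z = 0" "\<zeta>2 \<bullet> w = D"
    by (simp_all add: inner2 \<zeta>1_def \<zeta>2_def D_def algebra_simps)
  have Pz: "z \<bullet> P n = - g1 * (z \<bullet> n)" "w \<bullet> P n = - g2 * (w \<bullet> n)" for n
    using D by (simp_all add: P_def inner_add_right inner_diff_right inner_minus_right zz)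
  have bilA: "bil A x y = a1 * (z \<bullet> x) * (z \<bullet> y) + a2 * (w \<bullet> x) * (w \<bullet> y)" for x y
    by (simp add: A_def bil_add bil_scale bil_outer inner_commute)
  have bilC: "bil C x y = a1 * g1 * (z \<bullet> x) * (z \<bullet> y) + a2 * g2 * (w \<bullet> x) * (w \<bullet> y)" for x y
    by (simp add: C_def bil_add bil_scale bil_outer inner_commute)
  have bilB: "bil B x y = a1 * g1^2 * (z \<bullet> x) * (z \<bullet> y) + a2 * g2^2 * (w \<bullet> x) * (w \<bullet> y) + bil S x y" for x y
    by (simp add: B_def bil_add bil_scale bil_outer inner_commute)
  have bil0: "bil M 0 y = 0" "bil M x 0 = 0" for M x y by (simp_all add: bil_def)
  have K1: "qf A B C (blk \<zeta>1 0) (blk \<zeta>1 0) = a1 * D^2" "qf A B C (blk \<zeta>2 0) (blk \<zeta>2 0) = a2 * D^2"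
           "qf A B C (blk \<zeta>1 0) (blk \<zeta>2 0) = 0" "qf A B C (blk \<zeta>2 0) (blk \<zeta>1 0) = 0"
    by (simp_all add: qf_def bil0 bilA zz power2_eq_square)
  have K2: "qf A B C (blk \<zeta>1 0) (blk (P n) n) = 0" "qf A B C (blk \<zeta>2 0) (blk (P n) n) = 0"
           "qf A B C (blk (P n) n) (blk \<zeta>1 0) = 0" "qf A B C (blk (P n) n) (blk \<zeta>2 0) = 0" for n
    by (simp_all add: qf_def bil0 bilA bilC zz Pz algebra_simps)
  have K3: "qf A B C (blk (P n) n) (blk (P m) m) = bil S n m" for n m
    by (simp add: qf_def bilA bilB bilC Pz algebra_simps power2_eq_square)
  define Z where "Z l = (if l = 0 then blk \<zeta>1 0 else if l = 1 then blk \<zeta>2 0 else blk (P (\<nu> (l-2))) (\<nu> (l-2)))" for l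
  have "hrank (mk A B C) = 2 + s \<and> hrank_R (mk A B C) = 2 + s"
  proof (rule EQ[OF rd, of Z])
    fix l m assume l: "l < 2 + s" and m: "m < 2 + s" and lm: "l \<noteq> m"
    show "Qf (mk A B C) (Z l) (Z m) = 0"
    proof (cases "l < 2 \<and> m < 2")
      case True then show ?thesis using lm K1 by (auto simp: Qf_mk Z_def less_2_cases_iff)
    next
      case False
      then show ?thesis
      proof (cases "l < 2 \<or> m < 2")
        case True then show ?thesis using lm K1 K2 by (auto simp: Qf_mk Z_def less_2_cases_iff)
      next
        case False then show ?thesis using lm l m orth[of "l-2" "m-2"] K3 by (auto simp: Qf_mk Z_def)
      qed
    qed
  next
    fix l assume l: "l < 2 + s"
    show "Qf (mk A B C) (Z l) (Z l) \<noteq> 0"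
      using K1 K3 a1 a2 D nd[of "l-2"] l by (auto simp: Qf_mk Z_def)
  qed
  with rd show ?thesis by simp
qed


lemma bil_scale_args: "bil M (a *\<^sub>R x) y = a * bil M x y" "bil M x (a *\<^sub>R y) = a * bil M x y"
  by (simp_all add: bil_def sum_2 algebra_simps)

lemma bil_zero_mat: "bil 0 x y = 0" by (simp add: bil_def)

lemma CORE0:
  fixes v \<nu> :: "nat \<Rightarrow> real^2" and \<sigma> :: "nat \<Rightarrow> real" and s :: nat
  defines "C \<equiv> (\<Sum>j<s. \<sigma> j *\<^sub>R outer (v j))"
  assumes orth: "\<And>i j. i < s \<Longrightarrow> j < s \<Longrightarrow> i \<noteq> j \<Longrightarrow> bil C (\<nu> i) (\<nu> j) = 0"
    and nd: "\<And>j. j < s \<Longrightarrow> bil C (\<nu> j) (\<nu> j) \<noteq> 0"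
  shows "rdec (mk 0 0 C) (s*2) \<and> hrank (mk 0 0 C) = s*2 \<and> hrank_R (mk 0 0 C) = s*2"
proof -
  have dec: "mk 0 0 C = (\<Sum>j<s. (\<sigma> j / 2) *\<^sub>R herm_prod (cvec (v2 1 1)) (cvec (v j))
      + (- \<sigma> j / 2) *\<^sub>R herm_prod (cvec (v2 1 (-1))) (cvec (v j)))"
    unfolding mk_hp mk_scale mk_sum mk_add C_def
    by (simp add: algebra_simps scaleR_add_left[symmetric] del: scaleR_add_left)
  have rd: "rdec (mk 0 0 C) (s*2)"
    unfolding dec by (rule rdec_sum) (metis one_add_one rdec_add rdec_1)
  define e :: "nat \<Rightarrow> real" where "e l = (if even l then 1 else -1)" for l
  define Z where "Z l = blk (\<nu> (l div 2)) (e l *\<^sub>R \<nu> (l div 2))" for l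
  have q: "qf 0 0 C (Z l) (Z m) = (e l + e m) * bil C (\<nu> (l div 2)) (\<nu> (m div 2))" for l m
    by (simp add: qf_def Z_def bil_scale_args bil_zero_mat algebra_simps)
  have "hrank (mk 0 0 C) = s*2 \<and> hrank_R (mk 0 0 C) = s*2"
  proof (rule EQ[OF rd, of Z])
    fix l m assume l: "l < s*2" and m: "m < s*2" and lm: "l \<noteq> m"
    show "Qf (mk 0 0 C) (Z l) (Z m) = 0"
    proof (cases "l div 2 = m div 2")
      case True
      then have "e l + e m = 0" using lm unfolding e_def
        by (metis add.inverse_inverse add.right_inverse add_neg_numeral_special(7) div_mult_mod_eq odd_iff_mod_2_eq_one even_iff_mod_2_eq_zero)
      then show ?thesis by (simp add: Qf_mk q)
    next
      case False
      then show ?thesis using orth[of "l div 2" "m div 2"] l m by (simp add: Qf_mk q less_mult_imp_div_less)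
    qed
  next
    fix l assume l: "l < s*2"
    have "e l + e l \<noteq> 0" by (simp add: e_def)
    then show "Qf (mk 0 0 C) (Z l) (Z l) \<noteq> 0"
      using nd[of "l div 2"] l by (simp add: Qf_mk q less_mult_imp_div_less)
  qed
  with rd show ?thesis by simp
qed


lemma mat2_eq: "(M::real^2^2) = N \<longleftrightarrow> M$1$1 = N$1$1 \<and> M$1$2 = N$1$2 \<and> M$2$1 = N$2$1 \<and> M$2$2 = N$2$2"
  by (auto simp: vec_eq_iff forall_2)

lemma v2_eq0: "v2 a b = 0 \<longleftrightarrow> a = 0 \<and> b = 0"
  by (auto simp: vec_eq_iff forall_2)

lemma vec2_eq0: "(x::real^2) = 0 \<longleftrightarrow> x$1 = 0 \<and> x$2 = 0"
  by (auto simp: vec_eq_iff forall_2)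

lemma sq1:
  assumes "symm S" "det2 S = 0"
  shows "\<exists>\<beta> w. w \<noteq> 0 \<and> S = \<beta> *\<^sub>R outer w"
proof (cases "S$1$1 = 0")
  case True
  then have "S$1$2 = 0" using assms by (simp add: det2_def symm_def)
  then show ?thesis using True assms
    by (intro exI[of _ "S$2$2"] exI[of _ "v2 0 1"]) (simp add: v2_eq0 mat2_eq outer_def symm_def)
next
  case False
  have r: "S$2$2 = (S$1$2)^2 / S$1$1" using assms False
    by (simp add: det2_def symm_def field_simps power2_eq_square)
  show ?thesis using False assms
    by (intro exI[of _ "1 / S$1$1"] exI[of _ "v2 (S$1$1) (S$1$2)"])
      (simp add: v2_eq0 mat2_eq outer_def symm_def r power2_eq_square)
qed

lemma diagw:
  assumes "symm A" "det2 A \<noteq> 0"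
    and k: "A$2$2 * (w$1)^2 - 2 * A$1$2 * w$1 * w$2 + A$1$1 * (w$2)^2 \<noteq> 0"
  shows "\<exists>a1 a2 z. A = a1 *\<^sub>R outer z + a2 *\<^sub>R outer w"
proof -
  define \<kappa> where "\<kappa> = A$2$2 * (w$1)^2 - 2 * A$1$2 * w$1 * w$2 + A$1$1 * (w$2)^2"
  define a2 where "a2 = det2 A / \<kappa>"
  define S where "S = A - a2 *\<^sub>R outer w"
  have "symm S" using assms(1) by (simp add: S_def symm_def outer_def mult.commute)
  moreover have "det2 S = det2 A - a2 * \<kappa>" using assms(1)
    by (simp add: S_def det2_def outer_def \<kappa>_def symm_def algebra_simps power2_eq_square)
  then have "det2 S = 0" using k by (simp add: a2_def \<kappa>_def)
  ultimately obtain b z where "S = b *\<^sub>R outer z" using sq1 by blast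
  then have "A = b *\<^sub>R outer z + a2 *\<^sub>R outer w" by (simp add: S_def algebra_simps)
  then show ?thesis by blast
qed

lemma sum2: "(\<Sum>j<(2::nat). f j) = f 0 + f 1" by (simp add: numeral_2_eq_2)

lemma Slem:
  assumes "symm S"
  shows "\<exists>s\<le>2. \<exists>(\<sigma>::nat \<Rightarrow> real) (v::nat \<Rightarrow> real^2) (\<nu>::nat \<Rightarrow> real^2).
     S = (\<Sum>j<s. \<sigma> j *\<^sub>R outer (v j)) \<and>
     (\<forall>i<s. \<forall>j<s. i \<noteq> j \<longrightarrow> bil S (\<nu> i) (\<nu> j) = 0) \<and> (\<forall>j<s. bil S (\<nu> j) (\<nu> j) \<noteq> 0)"
proof (cases "det2 S = 0")
  case True
  then obtain b w where w: "w \<noteq> 0" and S: "S = b *\<^sub>R outer w" using sq1 assms by blast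
  show ?thesis
  proof (cases "b = 0")
    case True then show ?thesis using S by (intro exI[of _ 0]) simp
  next
    case False
    have "w \<bullet> w \<noteq> 0" using w by simp
    then have "bil S w w \<noteq> 0" using False by (simp add: S bil_scale bil_outer)
    then show ?thesis using S
      by (intro exI[of _ 1] conjI exI[of _ "\<lambda>_. b"] exI[of _ "\<lambda>_. w"] exI[of _ "\<lambda>_. w"]) auto
  qed
next
  case False
  obtain w :: "real^2" where k: "S$2$2 * (w$1)^2 - 2 * S$1$2 * w$1 * w$2 + S$1$1 * (w$2)^2 \<noteq> 0"
  proof (cases "S$2$2 = 0")
    case False then show ?thesis using that[of "v2 1 0"] by simp
  next
    case T1: True
    show ?thesis
    proof (cases "S$1$1 = 0")
      case False then show ?thesis using that[of "v2 0 1"] by simp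
    next
      case True
      then have "S$1$2 \<noteq> 0" using T1 \<open>det2 S \<noteq> 0\<close> assms by (simp add: det2_def symm_def)
      then show ?thesis using that[of "v2 1 1"] True T1 by simp
    qed
  qed
  obtain a1 a2 z where Sd: "S = a1 *\<^sub>R outer z + a2 *\<^sub>R outer w"
    using diagw[OF assms False k] by blast
  define D where "D = z$1 * w$2 - z$2 * w$1"
  have "det2 S = a1 * a2 * D^2" unfolding Sd D_def by (rule det_two)
  with False have a1: "a1 \<noteq> 0" and a2: "a2 \<noteq> 0" and D: "D \<noteq> 0" by auto
  define \<zeta>1 where "\<zeta>1 = v2 (w$2) (- w$1)"
  define \<zeta>2 where "\<zeta>2 = v2 (- z$2) (z$1)"
  have zz: "\<zeta>1 \<bullet> z = D" "\<zeta>1 \<bullet> w = 0" "\<zeta>2 \<bullet> z = 0" "\<zeta>2 \<bullet> w = D"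
    by (simp_all add: inner2 \<zeta>1_def \<zeta>2_def D_def algebra_simps)
  have bS: "bil S x y = a1 * (x \<bullet> z) * (y \<bullet> z) + a2 * (x \<bullet> w) * (y \<bullet> w)" for x y
    by (simp add: Sd bil_add bil_scale bil_outer)
  define \<sigma> :: "nat \<Rightarrow> real" where "\<sigma> j = (if j = 0 then a1 else a2)" for j
  define v :: "nat \<Rightarrow> real^2" where "v j = (if j = 0 then z else w)" for j
  define \<nu> :: "nat \<Rightarrow> real^2" where "\<nu> j = (if j = 0 then \<zeta>1 else \<zeta>2)" for j
  have "S = (\<Sum>j<2. \<sigma> j *\<^sub>R outer (v j))" by (simp add: sum2 \<sigma>_def v_def Sd)
  moreover have "\<forall>i<2. \<forall>j<2. i \<noteq> j \<longrightarrow> bil S (\<nu> i) (\<nu> j) = 0"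
    by (auto simp: bS zz \<nu>_def less_2_cases_iff)
  moreover have "\<forall>j<2. bil S (\<nu> j) (\<nu> j) \<noteq> 0"
    using a1 a2 D by (auto simp: bS zz \<nu>_def less_2_cases_iff)
  ultimately show ?thesis by (intro exI[of _ 2]) blast
qed

lemma quad_root:
  fixes dl T X c :: real
  assumes "dl \<noteq> 0" "X^2 = T^2 - 4*dl*c"
  shows "dl * ((T + X) / (2*dl))^2 - T * ((T + X) / (2*dl)) + c = 0"
proof -
  have "4 * dl * (dl * ((T + X) / (2*dl))^2 - T * ((T + X) / (2*dl)) + c) = X^2 - T^2 + 4*dl*c"
    using assms(1) by (simp add: field_simps power2_eq_square)
  then show ?thesis using assms by simp
qed

lemma pencil:
  assumes "symm A" "symm C" "det2 A > 0"
  shows "\<exists>g. det2 (C - g *\<^sub>R A) = 0"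
proof -
  define a where "a = A$1$1" define b where "b = A$1$2" define d where "d = A$2$2"
  define p where "p = C$1$1" define q where "q = C$1$2" define r where "r = C$2$2"
  have dA: "det2 A = a*d - b^2" using assms(1) by (simp add: det2_def a_def b_def d_def symm_def power2_eq_square)
  define T where "T = a*r + d*p - 2*b*q"
  define \<Delta> where "\<Delta> = T^2 - 4 * (a*d - b^2) * (p*r - q^2)"
  have id: "a^2 * \<Delta> = (a^2*r - 2*a*b*q + 2*b^2*p - a*d*p)^2 + 4 * (a*d - b^2) * (a*q - b*p)^2"
    by (simp add: \<Delta>_def T_def power2_eq_square algebra_simps)
  have "a \<noteq> 0" using assms(3) dA by (auto simp: power2_eq_square)
  have "a^2 * \<Delta> \<ge> 0" unfolding id using assms(3) dA by (intro add_nonneg_nonneg) auto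
  then have D0: "\<Delta> \<ge> 0" using \<open>a \<noteq> 0\<close> by (simp add: zero_le_mult_iff)
  define g where "g = (T + sqrt \<Delta>) / (2 * (a*d - b^2))"
  have e: "det2 (C - g *\<^sub>R A) = (a*d - b^2) * g^2 - T * g + (p*r - q^2)"
    using assms(1,2) by (simp add: det2_def a_def b_def d_def p_def q_def r_def T_def symm_def algebra_simps power2_eq_square)
  have s: "sqrt \<Delta> ^ 2 = \<Delta>" using D0 by simp
  have "(a*d - b^2) * g^2 - T * g + (p*r - q^2) = 0"
    unfolding g_def by (rule quad_root) (use assms(3) dA s \<Delta>_def in auto)
  then show ?thesis using e by metis
qed


lemma symm_outer: "symm (outer w)" by (simp add: symm_def outer_def mult.commute)
lemma symm_add: "symm M \<Longrightarrow> symm N \<Longrightarrow> symm (M + N)" by (simp add: symm_def)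
lemma symm_diff: "symm M \<Longrightarrow> symm N \<Longrightarrow> symm (M - N)" by (simp add: symm_def)
lemma symm_scale: "symm M \<Longrightarrow> symm (c *\<^sub>R M)" by (simp add: symm_def)

lemma DET:
  assumes sA: "symm A" and sB: "symm B" and sC: "symm C" and dA: "det2 A > 0"
  shows "\<exists>k\<le>4. rdec (mk A B C) k \<and> hrank (mk A B C) = k \<and> hrank_R (mk A B C) = k"
proof -
  obtain g where g: "det2 (C - g *\<^sub>R A) = 0" using pencil[OF sA sC dA] by blast
  have "symm (C - g *\<^sub>R A)" using sA sC by (simp add: symm_def)
  then obtain b w where w: "w \<noteq> 0" and bw: "C - g *\<^sub>R A = b *\<^sub>R outer w" using sq1 g by blast
  have k: "A$2$2 * (w$1)^2 - 2 * A$1$2 * w$1 * w$2 + A$1$1 * (w$2)^2 \<noteq> 0"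
  proof -
    have dA': "A$1$1 * A$2$2 - (A$1$2)^2 > 0" using dA sA by (simp add: det2_def symm_def power2_eq_square)
    then have a: "A$1$1 \<noteq> 0" by (auto simp: power2_eq_square) 
    have id: "A$1$1 * (A$2$2 * (w$1)^2 - 2 * A$1$2 * w$1 * w$2 + A$1$1 * (w$2)^2)
       = (A$1$1 * w$2 - A$1$2 * w$1)^2 + (A$1$1 * A$2$2 - (A$1$2)^2) * (w$1)^2"
      by (simp add: power2_eq_square algebra_simps)
    have "(A$1$1 * w$2 - A$1$2 * w$1)^2 + (A$1$1 * A$2$2 - (A$1$2)^2) * (w$1)^2 > 0"
    proof (cases "w$1 = 0")
      case True then have "w$2 \<noteq> 0" using w by (simp add: vec2_eq0)
      then show ?thesis using True a by simp
    next
      case False then show ?thesis using dA'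
        by (intro add_nonneg_pos) auto
    qed
    then show ?thesis using id by force
  qed
  obtain a1 a2 z where Ad: "A = a1 *\<^sub>R outer z + a2 *\<^sub>R outer w"
    using diagw[OF sA _ k] dA by force
  have "det2 A = a1 * a2 * (z$1 * w$2 - z$2 * w$1)^2" unfolding Ad by (rule det_two)
  then have a2: "a2 \<noteq> 0" using dA by auto
  define g2 where "g2 = (g * a2 + b) / a2"
  have Cd: "C = (a1 * g) *\<^sub>R outer z + (a2 * g2) *\<^sub>R outer w"
  proof -
    have "C = g *\<^sub>R A + b *\<^sub>R outer w" using bw by (simp add: algebra_simps)
    also have "\<dots> = (a1 * g) *\<^sub>R outer z + (a2 * g2) *\<^sub>R outer w"
      using a2 by (simp add: Ad g2_def algebra_simps scaleR_add_left[symmetric] del: scaleR_add_left) (simp add: field_simps)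
    finally show ?thesis .
  qed
  define S where "S = B - (a1 * g^2) *\<^sub>R outer z - (a2 * g2^2) *\<^sub>R outer w"
  have "symm S" unfolding S_def by (intro symm_diff symm_scale symm_outer sB)
  from Slem[OF this] obtain s \<sigma> v \<nu> where s: "s \<le> (2::nat)" and Sd: "S = (\<Sum>j<s. \<sigma> j *\<^sub>R outer (v j))"
    and orth: "\<forall>i<s. \<forall>j<s. i \<noteq> j \<longrightarrow> bil S (\<nu> i) (\<nu> j) = 0"
    and nd: "\<forall>j<s. bil S (\<nu> j) (\<nu> j) \<noteq> 0"
    by (elim exE conjE) (rule that; assumption)
  have Bd: "B = (a1 * g^2) *\<^sub>R outer z + (a2 * g2^2) *\<^sub>R outer w + (\<Sum>j<s. \<sigma> j *\<^sub>R outer (v j))"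
    using Sd unfolding S_def by (simp add: algebra_simps eq_diff_eq)
  have "rdec (mk A B C) (2 + s) \<and> hrank (mk A B C) = 2 + s \<and> hrank_R (mk A B C) = 2 + s"
    unfolding Ad Bd Cd
  proof (rule CORE)
    show "det2 (a1 *\<^sub>R outer z + a2 *\<^sub>R outer w) \<noteq> 0" using dA unfolding Ad by simp
    show "bil (\<Sum>j<s. \<sigma> j *\<^sub>R outer (v j)) (\<nu> i) (\<nu> j) = 0" if "i < s" "j < s" "i \<noteq> j" for i j
      using orth that unfolding Sd[symmetric] by blast
    show "bil (\<Sum>j<s. \<sigma> j *\<^sub>R outer (v j)) (\<nu> j) (\<nu> j) \<noteq> 0" if "j < s" for j
      using nd that unfolding Sd[symmetric] by blast
  qed
  then show ?thesis using s by (intro exI[of _ "2+s"]) auto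
qed


lemma GOOD:
  assumes sA: "symm A" and sB: "symm B" and sC: "symm C"
    and c: "det2 A > 0 \<or> det2 B > 0 \<or> (A = 0 \<and> B = 0)"
  shows "\<exists>k\<le>4. rdec (mk A B C) k \<and> hrank (mk A B C) = k \<and> hrank_R (mk A B C) = k"
proof -
  consider "det2 A > 0" | "det2 B > 0" | "A = 0 \<and> B = 0" using c by blast
  then show ?thesis
  proof cases
    case 1 then show ?thesis using DET[OF sA sB sC] by blast
  next
    case 2
    then obtain k where k: "k \<le> 4" "rdec (mk B A C) k" "hrank (mk B A C) = k" "hrank_R (mk B A C) = k"
      using DET[OF sB sA sC] by blast
    have e: "mk A B C = swT (mk B A C)" by (simp add: swT_mk)
    show ?thesis unfolding e using k rdec_swT hrank_swT hrank_R_swT by metis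
  next
    case 3
    from Slem[OF sC] obtain s \<sigma> v \<nu> where s: "s \<le> (2::nat)" and Cd: "C = (\<Sum>j<s. \<sigma> j *\<^sub>R outer (v j))"
      and orth: "\<forall>i<s. \<forall>j<s. i \<noteq> j \<longrightarrow> bil C (\<nu> i) (\<nu> j) = 0"
      and nd: "\<forall>j<s. bil C (\<nu> j) (\<nu> j) \<noteq> 0"
      by (elim exE conjE) (rule that; assumption)
    have "rdec (mk 0 0 C) (s*2) \<and> hrank (mk 0 0 C) = s*2 \<and> hrank_R (mk 0 0 C) = s*2"
      unfolding Cd
    proof (rule CORE0)
      show "bil (\<Sum>j<s. \<sigma> j *\<^sub>R outer (v j)) (\<nu> i) (\<nu> j) = 0" if "i < s" "j < s" "i \<noteq> j" for i j
        using orth that unfolding Cd[symmetric] by blast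
      show "bil (\<Sum>j<s. \<sigma> j *\<^sub>R outer (v j)) (\<nu> j) (\<nu> j) \<noteq> 0" if "j < s" for j
        using nd that unfolding Cd[symmetric] by blast
    qed
    then show ?thesis using 3 s by (intro exI[of _ "s*2"]) auto
  qed
qed

lemma mkdef:
  assumes "symm A" "A \<noteq> 0"
  shows "\<exists>\<mu> y. det2 (A + \<mu> *\<^sub>R outer y) > 0"
proof (cases "A$1$1 = 0")
  case False
  show ?thesis
    by (rule exI[of _ "((A$1$2)^2 + 1) / A$1$1 - A$2$2"], rule exI[of _ "v2 0 1"])
      (use False assms(1) in \<open>simp add: det2_def outer_def symm_def field_simps power2_eq_square\<close>)
next
  case T1: True
  show ?thesis
  proof (cases "A$2$2 = 0")
    case False
    show ?thesis
      by (rule exI[of _ "((A$1$2)^2 + 1) / A$2$2"], rule exI[of _ "v2 1 0"])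
        (use False T1 assms(1) in \<open>simp add: det2_def outer_def symm_def field_simps power2_eq_square\<close>)
  next
    case True
    then have "A$1$2 \<noteq> 0" using T1 assms by (auto simp: mat2_eq symm_def)
    then show ?thesis using True T1 assms(1)
      by (intro exI[of _ "- A$1$2"] exI[of _ "v2 1 1"]) (simp add: det2_def outer_def symm_def not_square_less_zero zero_less_mult_iff; linarith)
  qed
qed

lemma FIVE_A:
  assumes sA: "symm A" and sB: "symm B" and sC: "symm C" and A: "A \<noteq> 0"
  shows "\<exists>k\<le>5. rdec (mk A B C) k"
proof -
  obtain \<mu> y where d: "det2 (A + \<mu> *\<^sub>R outer y) > 0" using mkdef[OF sA A] by blast
  have s': "symm (A + \<mu> *\<^sub>R outer y)" using sA by (intro symm_add symm_scale symm_outer)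
  obtain k where k: "k \<le> 4" "rdec (mk (A + \<mu> *\<^sub>R outer y) B C) k"
    using DET[OF s' sB sC d] by blast
  have e: "mk A B C = mk (A + \<mu> *\<^sub>R outer y) B C + (- \<mu>) *\<^sub>R herm_prod (cvec (v2 1 0)) (cvec y)"
    unfolding mk_hp mk_scale mk_add by simp
  have "rdec (mk A B C) (k + 1)" unfolding e by (intro rdec_add k(2) rdec_1)
  then show ?thesis using k(1) by (intro exI[of _ "k+1"]) auto
qed

lemma FIVE:
  assumes sA: "symm A" and sB: "symm B" and sC: "symm C"
  shows "\<exists>k\<le>5. rdec (mk A B C) k"
proof (cases "A = 0 \<and> B = 0")
  case True
  then obtain k where "k \<le> 4" "rdec (mk A B C) k" using GOOD[OF sA sB sC] by blast
  then show ?thesis by (intro exI[of _ k]) auto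
next
  case False
  show ?thesis
  proof (cases "A = 0")
    case False then show ?thesis using FIVE_A[OF sA sB sC] by blast
  next
    case True
    with \<open>\<not> (A = 0 \<and> B = 0)\<close> have "B \<noteq> 0" by blast
    then obtain k where "k \<le> 5" "rdec (mk B A C) k" using FIVE_A[OF sB sA sC] by blast
    then show ?thesis using rdec_swT[of "mk B A C" k] by (auto simp: swT_mk)
  qed
qed

lemma qform2: "(x::real^2) \<bullet> ((M::real^2^2) *v x) = M$1$1 * (x$1)^2 + (M$1$2 + M$2$1) * x$1 * x$2 + M$2$2 * (x$2)^2"
  by (simp add: inner2 matrix_vector_mult_def sum_2 algebra_simps power2_eq_square)

lemma def_det:
  assumes "symm M" "pos_def M \<or> neg_def M"
  shows "det2 M > 0"
proof -
  have q: "x \<bullet> (M *v x) = M$1$1 * (x$1)^2 + 2 * M$1$2 * x$1 * x$2 + M$2$2 * (x$2)^2" for x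
    using assms(1) by (simp add: qform2 symm_def)
  have e1: "v2 1 0 \<noteq> 0" by (simp add: v2_eq0)
  have q1: "v2 1 0 \<bullet> (M *v v2 1 0) = M$1$1" by (simp add: q)
  have a: "M$1$1 \<noteq> 0"
  proof
    assume "M$1$1 = 0"
    then have "v2 1 0 \<bullet> (M *v v2 1 0) = 0" using q1 by simp
    then show False using assms(2) e1 unfolding pos_def_def neg_def_def by force
  qed
  then have e2: "v2 (- M$1$2) (M$1$1) \<noteq> 0" by (simp add: v2_eq0)
  have qq: "v2 (- M$1$2) (M$1$1) \<bullet> (M *v v2 (- M$1$2) (M$1$1)) = M$1$1 * det2 M"
    using assms(1) by (simp add: q det2_def symm_def power2_eq_square algebra_simps)
  from assms(2) show ?thesis
  proof
    assume p: "pos_def M"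
    have "M$1$1 > 0" using p[unfolded pos_def_def, rule_format, OF e1] q1 by simp
    moreover have "M$1$1 * det2 M > 0" using p[unfolded pos_def_def, rule_format, OF e2] qq by simp
    ultimately show ?thesis by (simp add: zero_less_mult_iff)
  next
    assume p: "neg_def M"
    have "M$1$1 < 0" using p[unfolded neg_def_def, rule_format, OF e1] q1 by simp
    moreover have "M$1$1 * det2 M < 0" using p[unfolded neg_def_def, rule_format, OF e2] qq by simp
    ultimately show ?thesis by (simp add: mult_less_0_iff)
  qed
qed

theorem theorem4p3:
  fixes H :: tensor22
  defines "A \<equiv> flat_block H 1 1" and "B \<equiv> flat_block H 2 2"
  assumes "H \<in> RD22"
  shows "hrank_R H \<le> 5 \<and>
    ((pos_def A \<or> neg_def A \<or> pos_def B \<or> neg_def B \<or> (A = 0 \<and> B = 0)) \<longrightarrow>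
       hrank H = hrank_R H \<and> hrank_R H \<le> 4)"
proof -
  define C where "C = flat_block H 1 2"
  have H: "H = mk A B C" and sA: "symm A" and sB: "symm B" and sC: "symm C"
    using RD_mk[OF assms(3)] unfolding A_def B_def C_def by auto
  have five: "hrank_R H \<le> 5"
  proof -
    obtain k where "k \<le> 5" "rdec H k" using FIVE[OF sA sB sC] H by blast
    then show ?thesis using hrank_R_le[of H k] by simp
  qed
  moreover have "hrank H = hrank_R H \<and> hrank_R H \<le> 4"
    if "pos_def A \<or> neg_def A \<or> pos_def B \<or> neg_def B \<or> (A = 0 \<and> B = 0)"
  proof -
    have "det2 A > 0 \<or> det2 B > 0 \<or> (A = 0 \<and> B = 0)"
      using that def_det[OF sA] def_det[OF sB] by blast
    then obtain k where "k \<le> 4" "hrank H = k" "hrank_R H = k" using GOOD[OF sA sB sC] H by blast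
    then show ?thesis by simp
  qed
  ultimately show ?thesis by blast
qed

end
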